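(* Let $D\in\mathcal{U}(n,s_1\cdots s_{p+q})$ (first $p$ factors qualitative, last $q$ quantitative), let $N=\prod_{k=1}^{p+q}s_k$ and $y=y(D)$. Then $$\mathrm{QQD}^2(D)=-\prod_{k=1}^{p}\left(\frac{5s_k+1}{4s_k}\right)\left(\frac43\right)^q+\frac{1}{n^2}y^TAy,$$ where $A=A_1\otimes A_2\otimes\cdots\otimes A_{p+q}$ ($\otimes$ the Kronecker product), $A_k=(t^k_{ij})_{i,j=1}^{s_k}$, with $t^k_{ij}=(3/2)^{\delta_{ij}}(5/4)^{1-\delta_{ij}}$ for $k=1,\dots,p$ and $t^k_{ij}=\frac32-\frac{|i-j|(s_k-|i-j|)}{s_k^2}$ for $k=p+1,\dots,p+q$.
   Context: A U-type design in $\mathcal{U}(n,s_1\cdots s_{p+q})$ is an $n\times(p+q)$ matrix whose $k$th column takes each value in $\{0,\dots,s_k-1\}$ equally often; the first $p$ columns are qualitative, the last $q$ quantitative. For quantitative columns a level $x$ is transformed to $(2x+1)/(2s_k)\in[0,1]$. Let $\chi=\prod_k\chi_k$, $\chi_k=\{0,\dots,s_k-1\}$ for $k\le p$, $\chi_k=[0,1]$ for $k>p$, and $F$ the uniform distribution on $\chi$. Kernel: $\mathcal{K}(t,z)=\prod_k\mathcal{K}_k(t_k,z_k)$ with $\mathcal{K}_k=(3/2)^{\delta_{t_kz_k}}(5/4)^{1-\delta_{t_kz_k}}$ for $k\le p$ ($\delta$ the Kronecker delta) and $\mathcal{K}_k=\frac32-|t_k-z_k|+|t_k-z_k|^2$ for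 $k>p$. For $D$ with (transformed) rows $x_1,\dots,x_n$, $\mathrm{QQD}^2(D)=\int_{\chi^2}\mathcal{K}\,dF\,dF-\frac2n\sum_i\int_\chi\mathcal{K}(t,x_i)dF(t)+\frac1{n^2}\sum_{i,j}\mathcal{K}(x_i,x_j)$. The vector $y(D)$ is the $N$-dimensional column vector whose entries $n(i_1,\dots,i_{p+q})$, arranged in lexicographic order of $(i_1,\dots,i_{p+q})$, are the numbers of runs of $D$ at level combination $(i_1,\dots,i_{p+q})$. *)

theory Defs
  imports "HOL-Probability.Probability"
begin

text \<open>A design with n runs and m = p+q factors is a function D :: nat => nat => nat,
  D i k being the level of run i (i < n) in column k (k < m).\<close>

definition U_type :: "nat \<Rightarrow> (nat \<Rightarrow> nat) \<Rightarrow> nat \<Rightarrow> (nat \<Rightarrow> nat \<Rightarrow> nat) \<Rightarrow> bool" where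
  "U_type n s m D \<longleftrightarrow>
     (\<forall>i<n. \<forall>k<m. D i k < s k) \<and>
     (\<forall>k<m. \<forall>v<s k. \<forall>w<s k. card {i. i < n \<and> D i k = v} = card {i. i < n \<and> D i k = w})"

definition design_point :: "nat \<Rightarrow> (nat \<Rightarrow> nat) \<Rightarrow> (nat \<Rightarrow> nat) \<Rightarrow> nat \<Rightarrow> real" where
  "design_point p s r k = (if k < p then real (r k) else (2 * real (r k) + 1) / (2 * real (s k)))"

definition chi_measure :: "nat \<Rightarrow> nat \<Rightarrow> (nat \<Rightarrow> nat) \<Rightarrow> (nat \<Rightarrow> real) measure" where
  "chi_measure p q s = PiM {..<p+q}
     (\<lambda>k. if k < p then uniform_count_measure (real ` {..<s k}) else uniform_measure lborel {0..1})"

definition kernel1 :: "nat \<Rightarrow> nat \<Rightarrow> real \<Rightarrow> real \<Rightarrow> real" where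
  "kernel1 p k t z = (if k < p then (3/2) ^ (if t = z then 1 else 0) * (5/4) ^ (1 - (if t = z then 1 else 0))
                      else 3/2 - \<bar>t - z\<bar> + \<bar>t - z\<bar>^2)"

definition kernel :: "nat \<Rightarrow> nat \<Rightarrow> (nat \<Rightarrow> real) \<Rightarrow> (nat \<Rightarrow> real) \<Rightarrow> real" where
  "kernel p q t z = (\<Prod>k<p+q. kernel1 p k (t k) (z k))"

definition QQD2 :: "nat \<Rightarrow> nat \<Rightarrow> nat \<Rightarrow> (nat \<Rightarrow> nat) \<Rightarrow> (nat \<Rightarrow> nat \<Rightarrow> nat) \<Rightarrow> real" where
  "QQD2 n p q s D =
     (let F = chi_measure p q s; x = (\<lambda>i. design_point p s (D i)) in
       (\<integral>t. (\<integral>z. kernel p q t z \<partial>F) \<partial>F)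
       - 2 / real n * (\<Sum>i<n. \<integral>t. kernel p q t (x i) \<partial>F)
       + 1 / (real n)^2 * (\<Sum>i<n. \<Sum>j<n. kernel p q (x i) (x j)))"

text \<open>Position (0-based) of a level combination in the lexicographic order
  of {0..<s 0} x ... x {0..<s (m-1)} (mixed radix, last coordinate fastest).\<close>
definition lex_index :: "(nat \<Rightarrow> nat) \<Rightarrow> nat \<Rightarrow> (nat \<Rightarrow> nat) \<Rightarrow> nat" where
  "lex_index s m a = (\<Sum>k<m. a k * (\<Prod>l\<in>{k<..<m}. s l))"

definition y_vec :: "nat \<Rightarrow> (nat \<Rightarrow> nat) \<Rightarrow> nat \<Rightarrow> (nat \<Rightarrow> nat \<Rightarrow> nat) \<Rightarrow> nat \<Rightarrow> real" where
  "y_vec n s m D j = real (card {i. i < n \<and> lex_index s m (D i) = j})"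

text \<open>Kronecker product of a list of square matrices (M, dim), matrices as 0-indexed
  functions: (A \<otimes> B)(i,j) = A(i div d_B, j div d_B) * B(i mod d_B, j mod d_B).\<close>
fun kron_list :: "((nat \<Rightarrow> nat \<Rightarrow> real) \<times> nat) list \<Rightarrow> nat \<Rightarrow> nat \<Rightarrow> real" where
  "kron_list [] = (\<lambda>i j. 1)"
| "kron_list ((M, d) # rest) =
     (let d' = prod_list (map snd rest) in
        (\<lambda>i j. M (i div d') (j div d') * kron_list rest (i mod d') (j mod d')))"

text \<open>A_k with 0-based indices (|i-j| is unchanged by the shift from 1-based).\<close>
definition A_factor :: "nat \<Rightarrow> (nat \<Rightarrow> nat) \<Rightarrow> nat \<Rightarrow> nat \<Rightarrow> nat \<Rightarrow> real" where
  "A_factor p s k i j =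
     (if k < p then (3/2) ^ (if i = j then 1 else 0) * (5/4) ^ (1 - (if i = j then 1 else 0))
      else 3/2 - real (nat \<bar>int i - int j\<bar>) * (real (s k) - real (nat \<bar>int i - int j\<bar>)) / (real (s k))^2)"

definition A_matrix :: "nat \<Rightarrow> nat \<Rightarrow> (nat \<Rightarrow> nat) \<Rightarrow> nat \<Rightarrow> nat \<Rightarrow> real" where
  "A_matrix p q s = kron_list (map (\<lambda>k. (A_factor p s k, s k)) [0..<p+q])"

end

theory Submission
  imports Defs
begin


lemma abs_int_has:
  fixes u :: real assumes u: "0 \<le> u" "u \<le> 1"
  shows "((\<lambda>z. 3/2 - \<bar>u - z\<bar> + (u - z)^2) has_integral (4/3)) {0..1}"
proof -
  define G where "G z = 3/2 * z + (u - z)^2/2 - (u - z)^3/3" for z :: real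
  define H where "H z = 3/2 * z - (z - u)^2/2 + (z - u)^3/3" for z :: real
  have g: "((\<lambda>z. 3/2 - (u - z) + (u - z)^2) has_integral (G u - G 0)) {0..u}"
    apply (rule fundamental_theorem_of_calculus)
    using u apply simp
    unfolding G_def
    apply (subst has_real_derivative_iff_has_vector_derivative[symmetric])
    apply (auto intro!: derivative_eq_intros simp: power2_eq_square power3_eq_cube field_simps)
    done
  have h: "((\<lambda>z. 3/2 - (z - u) + (z - u)^2) has_integral (H 1 - H u)) {u..1}"
    apply (rule fundamental_theorem_of_calculus)
    using u apply simp
    unfolding H_def
    apply (subst has_real_derivative_iff_has_vector_derivative[symmetric])
    apply (auto intro!: derivative_eq_intros simp: power2_eq_square power3_eq_cube field_simps)
    done
  have g': "((\<lambda>z. 3/2 - \<bar>u - z\<bar> + (u - z)^2) has_integral (G u - G 0)) {0..u}"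
    using g by (rule has_integral_cong[THEN iffD1, rotated]) (simp add: power2_eq_square)
  have h': "((\<lambda>z. 3/2 - \<bar>u - z\<bar> + (u - z)^2) has_integral (H 1 - H u)) {u..1}"
    using h by (rule has_integral_cong[THEN iffD1, rotated]) (simp add: power2_eq_square algebra_simps)
  have "(G u - G 0) + (H 1 - H u) = 4/3"
    unfolding G_def H_def by (simp add: power2_eq_square power3_eq_cube field_simps)
  with has_integral_combine[OF u g' h'] show ?thesis by simp
qed

definition chiM :: "nat \<Rightarrow> (nat \<Rightarrow> nat) \<Rightarrow> nat \<Rightarrow> real measure" where
  "chiM p s k = (if k < p then uniform_count_measure (real ` {..<s k}) else uniform_measure lborel {0..1})"

lemma chi_eq: "chi_measure p q s = PiM {..<p+q} (chiM p s)"
proof -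
  have "chiM p s = (\<lambda>k. if k < p then uniform_count_measure (real ` {..<s k}) else uniform_measure lborel {0..1})"
    by (rule ext) (simp add: chiM_def)
  then show ?thesis by (simp add: chi_measure_def)
qed

lemma prob_chiM: assumes "\<And>k. k < p \<Longrightarrow> 0 < s k" shows "prob_space (chiM p s k)"
proof (cases "k < p")
  case True
  then have "0 < s k" using assms by auto
  then show ?thesis using True by (auto simp: chiM_def intro!: prob_space_uniform_count_measure)
next
  case False
  then show ?thesis by (auto simp: chiM_def intro!: prob_space_uniform_measure)
qed

lemma integrable_ucm: "finite A \<Longrightarrow> integrable (uniform_count_measure A) (f :: _ \<Rightarrow> real)"
  unfolding uniform_count_measure_def by (rule integrable_point_measure_finite)

lemma UM: "uniform_measure lborel {0..1::real} = density lborel (\<lambda>x. ennreal (indicator {0..1} x))"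
  by (simp add: uniform_measure_def ennreal_indicator divide_ennreal_def)

lemma kq_meas: "(\<lambda>z::real. 3/2 - \<bar>u - z\<bar> + (u - z)^2) \<in> borel_measurable lborel"
  by measurable

lemma kq_int: "integrable lborel (\<lambda>z::real. indicator {0..1} z * (3/2 - \<bar>u - z\<bar> + (u - z)^2))"
proof -
  have "continuous_on {0..1::real} (\<lambda>z. 3/2 - \<bar>u-z\<bar> + (u-z)^2)" by (intro continuous_intros)
  from borel_integrable_compact[OF compact_Icc this] show ?thesis by simp
qed

lemma kq_integrable: "integrable (uniform_measure lborel {0..1}) (\<lambda>z::real. 3/2 - \<bar>u - z\<bar> + (u - z)^2)"
  unfolding UM
  apply (subst integrable_density)
  using kq_int[of u] by (auto intro!: kq_meas)

lemma kq_integral: assumes "0 \<le> u" "u \<le> 1"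
  shows "integral\<^sup>L (uniform_measure lborel {0..1}) (\<lambda>z::real. 3/2 - \<bar>u - z\<bar> + (u - z)^2) = 4/3"
proof -
  have "integral\<^sup>L (uniform_measure lborel {0..1}) (\<lambda>z::real. 3/2 - \<bar>u - z\<bar> + (u - z)^2)
     = (LINT z:{0..1}|lborel. 3/2 - \<bar>u - z\<bar> + (u - z)^2)"
    unfolding UM set_lebesgue_integral_def
    by (subst integral_density) (auto intro!: kq_meas)
  also have "\<dots> = integral {0..1} (\<lambda>z::real. 3/2 - \<bar>u - z\<bar> + (u - z)^2)"
    by (rule set_borel_integral_eq_integral(2)) (use kq_int[of u] in \<open>simp add: set_integrable_def\<close>)
  also have "\<dots> = 4/3" using abs_int_has[OF assms] by (rule integral_unique)
  finally show ?thesis .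
qed


definition ck :: "nat \<Rightarrow> (nat \<Rightarrow> nat) \<Rightarrow> nat \<Rightarrow> real" where
  "ck p s k = (if k < p then (5 * real (s k) + 1) / (4 * real (s k)) else 4/3)"

definition Xset :: "nat \<Rightarrow> (nat \<Rightarrow> nat) \<Rightarrow> nat \<Rightarrow> real set" where
  "Xset p s k = (if k < p then real ` {..<s k} else {0..1})"

lemma K_sym: "kernel1 p k t z = kernel1 p k z t"
  unfolding kernel1_def abs_minus_commute[of t z] by (cases "t = z") auto

lemma sum_if_eq:
  assumes "finite A" "x \<in> A"
  shows "(\<Sum>v\<in>A. (if x = v then a else b)) = a + (real (card A) - 1) * (b::real)"
proof -
  have "(\<Sum>v\<in>A. (if x = v then a else b)) = (\<Sum>v\<in>A. b + (if x = v then a - b else 0))"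
    by (rule sum.cong) auto
  also have "\<dots> = real (card A) * b + (a - b)" using assms by (simp add: sum.distrib)
  also have "\<dots> = a + (real (card A) - 1) * b" by (simp add: algebra_simps)
  finally show ?thesis .
qed

lemma K_int:
  assumes "k < p \<Longrightarrow> 0 < s k" "x \<in> Xset p s k"
  shows "integral\<^sup>L (chiM p s k) (\<lambda>z. kernel1 p k x z) = ck p s k"
proof (cases "k < p")
  case True
  let ?A = "real ` {..<s k}"
  have cA: "card ?A = s k" by (simp add: card_image)
  have x: "x \<in> ?A" using assms(2) True by (simp add: Xset_def)
  have "integral\<^sup>L (chiM p s k) (\<lambda>z. kernel1 p k x z) = (\<Sum>v\<in>?A. kernel1 p k x v) / card ?A"
    using True by (simp add: chiM_def integral_uniform_count_measure)
  also have "(\<Sum>v\<in>?A. kernel1 p k x v) = (\<Sum>v\<in>?A. (if x = v then 3/2 else 5/4))"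
    by (rule sum.cong) (auto simp: kernel1_def True)
  also have "\<dots> = 3/2 + (real (card ?A) - 1) * (5/4)"
    by (rule sum_if_eq) (use x in auto)
  finally show ?thesis using True assms(1) unfolding cA ck_def by (simp add: field_simps)
next
  case False
  then have "0 \<le> x" "x \<le> 1" using assms(2) by (auto simp: Xset_def)
  with False show ?thesis by (simp add: chiM_def ck_def kernel1_def kq_integral)
qed

lemma K_integrable: "integrable (chiM p s k) (\<lambda>z. kernel1 p k x z)"
proof (cases "k < p")
  case True then show ?thesis by (simp add: chiM_def integrable_ucm)
next
  case False then show ?thesis by (simp add: chiM_def kernel1_def kq_integrable)
qed

lemma g_meas: "(\<lambda>u. integral\<^sup>L (uniform_measure lborel {0..1::real}) (\<lambda>z. 3/2 - \<bar>u - z\<bar> + (u - z)^2))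
   \<in> borel_measurable (uniform_measure lborel {0..1::real})"
proof -
  interpret prob_space "uniform_measure lborel {0..1::real}"
    by (auto intro!: prob_space_uniform_measure)
  show ?thesis
    apply (rule borel_measurable_lebesgue_integral)
    apply measurable
    done
qed

lemma g_props:
  assumes "k < p \<Longrightarrow> 0 < s k"
  shows "integrable (chiM p s k) (\<lambda>u. integral\<^sup>L (chiM p s k) (\<lambda>z. kernel1 p k u z))"
    and "integral\<^sup>L (chiM p s k) (\<lambda>u. integral\<^sup>L (chiM p s k) (\<lambda>z. kernel1 p k u z)) = ck p s k"
proof -
  have "integrable (chiM p s k) (\<lambda>u. integral\<^sup>L (chiM p s k) (\<lambda>z. kernel1 p k u z)) \<and>
    integral\<^sup>L (chiM p s k) (\<lambda>u. integral\<^sup>L (chiM p s k) (\<lambda>z. kernel1 p k u z)) = ck p s k"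
  proof (cases "k < p")
    case True
    let ?A = "real ` {..<s k}"
    have cA: "card ?A = s k" by (simp add: card_image)
    have "integral\<^sup>L (chiM p s k) (\<lambda>u. integral\<^sup>L (chiM p s k) (\<lambda>z. kernel1 p k u z))
        = integral\<^sup>L (chiM p s k) (\<lambda>u. ck p s k)"
    proof (rule Bochner_Integration.integral_cong[OF refl])
      fix u assume "u \<in> space (chiM p s k)"
      then have "u \<in> Xset p s k" using True by (simp add: chiM_def space_uniform_count_measure Xset_def)
      then show "integral\<^sup>L (chiM p s k) (\<lambda>z. kernel1 p k u z) = ck p s k"
        using K_int[of k p s u] assms by blast
    qed
    also have "\<dots> = ck p s k"
    proof -
      have "prob_space (chiM p s k)" using True assms
        by (auto simp: chiM_def intro!: prob_space_uniform_count_measure)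
      then show ?thesis by (simp add: prob_space.prob_space)
    qed
    finally show ?thesis using True by (simp add: chiM_def integrable_ucm)
  next
    case False
    let ?U = "uniform_measure lborel {0..1::real}"
    let ?g = "\<lambda>u. integral\<^sup>L ?U (\<lambda>z. 3/2 - \<bar>u - z\<bar> + (u - z)^2)"
    interpret prob_space ?U by (auto intro!: prob_space_uniform_measure)
    have ae: "AE u in ?U. ?g u = 4/3"
      by (rule AE_uniform_measureI) (auto intro!: AE_I2 simp: kq_integral)
    have "integrable ?U ?g"
      using integrable_cong_AE[OF g_meas _ ae] by simp
    moreover have "integral\<^sup>L ?U ?g = 4/3"
      using integral_cong_AE[OF g_meas _ ae] by simp
    ultimately show ?thesis using False by (simp add: chiM_def kernel1_def ck_def)
  qed
  then show "integrable (chiM p s k) (\<lambda>u. integral\<^sup>L (chiM p s k) (\<lambda>z. kernel1 p k u z))"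
    and "integral\<^sup>L (chiM p s k) (\<lambda>u. integral\<^sup>L (chiM p s k) (\<lambda>z. kernel1 p k u z)) = ck p s k"
    by auto
qed



definition lexl :: "nat list \<Rightarrow> (nat \<Rightarrow> nat) \<Rightarrow> nat" where
  "lexl ds a = (\<Sum>k<length ds. a k * prod_list (drop (Suc k) ds))"

lemma lexl_Cons: "lexl (d#ds) a = a 0 * prod_list ds + lexl ds (\<lambda>k. a (Suc k))"
  unfolding lexl_def length_Cons by (subst sum.lessThan_Suc_shift) simp

lemma lexl_less: "(\<forall>k<length ds. a k < ds!k) \<Longrightarrow> lexl ds a < prod_list ds"
proof (induction ds arbitrary: a)
  case Nil show ?case by (simp add: lexl_def)
next
  case (Cons d ds)
  have r: "lexl ds (\<lambda>k. a (Suc k)) < prod_list ds"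
  proof (rule Cons.IH, intro allI impI)
    fix k assume "k < length ds"
    then show "a (Suc k) < ds ! k" using Cons.prems[rule_format, of "Suc k"] by simp
  qed
  have a0: "a 0 < d" using Cons.prems by auto
  have "lexl (d#ds) a = a 0 * prod_list ds + lexl ds (\<lambda>k. a (Suc k))" by (rule lexl_Cons)
  also have "\<dots> < a 0 * prod_list ds + prod_list ds" using r by simp
  also have "\<dots> = (a 0 + 1) * prod_list ds" by simp
  also have "\<dots> \<le> d * prod_list ds" using a0 by (intro mult_le_mono1) simp
  finally show ?case by simp
qed

lemma divmod_aux: "r < (d::nat) \<Longrightarrow> (a * d + r) div d = a \<and> (a * d + r) mod d = r"
  by simp

lemma kron_lexl:
  "(\<forall>k<length L. a k < snd (L!k) \<and> b k < snd (L!k)) \<Longrightarrow>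
   kron_list L (lexl (map snd L) a) (lexl (map snd L) b) = (\<Prod>k<length L. fst (L!k) (a k) (b k))"
proof (induction L arbitrary: a b)
  case Nil then show ?case by simp
next
  case (Cons x L)
  obtain M d where x: "x = (M,d)" by (cases x)
  let ?d' = "prod_list (map snd L)"
  let ?ra = "lexl (map snd L) (\<lambda>k. a (Suc k))"
  let ?rb = "lexl (map snd L) (\<lambda>k. b (Suc k))"
  have ra: "?ra < ?d'" by (rule lexl_less) (use Cons.prems in auto)
  have rb: "?rb < ?d'" by (rule lexl_less) (use Cons.prems in auto)
  have IH: "kron_list L ?ra ?rb = (\<Prod>k<length L. fst (L!k) (a (Suc k)) (b (Suc k)))"
  proof (rule Cons.IH, intro allI impI)
    fix k assume "k < length L"
    then show "a (Suc k) < snd (L ! k) \<and> b (Suc k) < snd (L ! k)"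
      using Cons.prems[rule_format, of "Suc k"] by simp
  qed
  have ea: "lexl (map snd (x#L)) a = a 0 * ?d' + ?ra" using x lexl_Cons by simp
  have eb: "lexl (map snd (x#L)) b = b 0 * ?d' + ?rb" using x lexl_Cons by simp
  have pr: "(\<Prod>k<length (x#L). fst ((x#L)!k) (a k) (b k)) = M (a 0) (b 0) * (\<Prod>k<length L. fst (L!k) (a (Suc k)) (b (Suc k)))"
    unfolding length_Cons prod.lessThan_Suc_shift by (simp add: x)
  show ?case
    unfolding ea eb pr using divmod_aux[OF ra, of "a 0"] divmod_aux[OF rb, of "b 0"] IH
    by (simp add: x Let_def)
qed

lemma lex_index_lexl: "lex_index s m a = lexl (map s [0..<m]) a"
  unfolding lex_index_def lexl_def
proof (rule sum.cong)
  fix k assume "k \<in> {..<length (map s [0..<m])}"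
  have "prod s {Suc k..<m} = prod_list (map s [Suc k..<m])"
    by (metis distinct_upt set_upt prod.distinct_set_conv_list)
  then show "a k * prod s {k<..<m} = a k * prod_list (drop (Suc k) (map s [0..<m]))"
    by (simp add: drop_map atLeastSucLessThan_greaterThanLessThan)
qed simp

lemma A_kron:
  assumes "\<forall>k<p+q. a k < s k \<and> b k < s k"
  shows "A_matrix p q s (lex_index s (p+q) a) (lex_index s (p+q) b) = (\<Prod>k<p+q. A_factor p s k (a k) (b k))"
proof -
  let ?L = "map (\<lambda>k. (A_factor p s k, s k)) [0..<p+q]"
  have ms: "map snd ?L = map s [0..<p+q]" by simp
  have "kron_list ?L (lexl (map snd ?L) a) (lexl (map snd ?L) b) = (\<Prod>k<length ?L. fst (?L!k) (a k) (b k))"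
    by (rule kron_lexl) (use assms in auto)
  then show ?thesis unfolding A_matrix_def lex_index_lexl ms by simp
qed

lemma lex_index_less: "\<forall>k<m. a k < s k \<Longrightarrow> lex_index s m a < (\<Prod>k<m. s k)"
proof -
  assume h: "\<forall>k<m. a k < s k"
  have "lexl (map s [0..<m]) a < prod_list (map s [0..<m])" by (rule lexl_less) (use h in auto)
  moreover have "prod_list (map s [0..<m]) = (\<Prod>k<m. s k)"
    by (metis distinct_upt set_upt prod.distinct_set_conv_list lessThan_atLeast0)
  ultimately show ?thesis by (simp add: lex_index_lexl)
qed

lemma group_sum:
  fixes f :: "nat \<Rightarrow> real" and h :: "nat \<Rightarrow> nat" and n N :: nat
  assumes "\<forall>i<n. h i < N"
  shows "(\<Sum>i<n. f (h i)) = (\<Sum>a<N. real (card {i. i < n \<and> h i = a}) * f a)"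
proof -
  have "(\<Sum>i<n. f (h i)) = (\<Sum>a<N. \<Sum>i\<in>{i \<in> {..<n}. h i = a}. f (h i))"
  proof -
    have sub: "h ` {..<n} \<subseteq> {..<N}" using assms by auto
    show ?thesis using sum.group[of "{..<n}" "{..<N}" h "\<lambda>i. f (h i)"] sub by simp
  qed
  also have "\<dots> = (\<Sum>a<N. real (card {i. i < n \<and> h i = a}) * f a)"
  proof (rule sum.cong)
    fix a
    have "(\<Sum>i\<in>{i \<in> {..<n}. h i = a}. f (h i)) = (\<Sum>i\<in>{i \<in> {..<n}. h i = a}. f a)"
      by (rule sum.cong) auto
    also have "\<dots> = real (card {i. i < n \<and> h i = a}) * f a" by simp
    finally show "(\<Sum>i\<in>{i \<in> {..<n}. h i = a}. f (h i)) = real (card {i. i < n \<and> h i = a}) * f a" .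
  qed simp
  finally show ?thesis .
qed

lemma double_group:
  fixes K :: "nat \<Rightarrow> nat \<Rightarrow> real" and h :: "nat \<Rightarrow> nat" and n N :: nat
  assumes "\<forall>i<n. h i < N"
  shows "(\<Sum>i<n. \<Sum>j<n. K (h i) (h j)) =
    (\<Sum>a<N. \<Sum>b<N. real (card {i. i < n \<and> h i = a}) * K a b * real (card {i. i < n \<and> h i = b}))"
proof -
  let ?y = "\<lambda>a. real (card {i. i < n \<and> h i = a})"
  have "(\<Sum>i<n. \<Sum>j<n. K (h i) (h j)) = (\<Sum>i<n. \<Sum>b<N. ?y b * K (h i) b)"
    by (rule sum.cong[OF refl]) (rule group_sum[OF assms])
  also have "\<dots> = (\<Sum>a<N. ?y a * (\<Sum>b<N. ?y b * K a b))"
    by (rule group_sum[OF assms, of "\<lambda>a. \<Sum>b<N. ?y b * K a b"])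
  also have "\<dots> = (\<Sum>a<N. \<Sum>b<N. ?y a * K a b * ?y b)"
    by (simp add: sum_distrib_left mult_ac)
  finally show ?thesis .
qed



lemma K_A:
  assumes "0 < s k" "r k < s k" "r' k < s k"
  shows "kernel1 p k (design_point p s r k) (design_point p s r' k) = A_factor p s k (r k) (r' k)"
proof (cases "k < p")
  case True then show ?thesis by (simp add: kernel1_def design_point_def A_factor_def)
next
  case False
  define a where "a = real (r k)"
  define b where "b = real (r' k)"
  define S where "S = real (s k)"
  have S: "S > 0" using assms by (simp add: S_def)
  have e1: "real (nat \<bar>int (r k) - int (r' k)\<bar>) = \<bar>a - b\<bar>" by (simp add: a_def b_def)
  have e2: "(2 * a + 1) / (2 * S) - (2 * b + 1) / (2 * S) = (a - b) / S"
    using S by (simp add: field_simps)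
  have "kernel1 p k (design_point p s r k) (design_point p s r' k)
      = 3/2 - \<bar>(2 * a + 1) / (2 * S) - (2 * b + 1) / (2 * S)\<bar> + \<bar>(2 * a + 1) / (2 * S) - (2 * b + 1) / (2 * S)\<bar>^2"
    using False by (simp add: kernel1_def design_point_def a_def b_def S_def)
  also have "\<dots> = 3/2 - \<bar>(a - b) / S\<bar> + \<bar>(a - b) / S\<bar>^2"
    by (simp only: e2)
  also have "\<dots> = 3/2 - \<bar>a - b\<bar> * (S - \<bar>a - b\<bar>) / S^2"
    using S by (simp add: abs_divide power_divide field_simps power2_eq_square)
  also have "\<dots> = A_factor p s k (r k) (r' k)"
    using False by (simp add: A_factor_def e1 S_def)
  finally show ?thesis .
qed

theorem lemma1:
  fixes n p q :: nat and s :: "nat \<Rightarrow> nat" and D :: "nat \<Rightarrow> nat \<Rightarrow> nat"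
  assumes "n > 0"
    and "U_type n s (p + q) D"
  shows "QQD2 n p q s D =
           - (\<Prod>k<p. (5 * real (s k) + 1) / (4 * real (s k))) * (4/3) ^ q
           + 1 / (real n)^2 *
             (let N = (\<Prod>k<p+q. s k); y = y_vec n s (p + q) D; A = A_matrix p q s in
                \<Sum>i<N. \<Sum>j<N. y i * A i j * y j)"
proof -
  define I where "I = {..<p+q}"
  define F where "F = chi_measure p q s"
  define x where "x = (\<lambda>i. design_point p s (D i))"
  define N where "N = (\<Prod>k<p+q. s k)"
  have lev: "\<And>i k. i < n \<Longrightarrow> k < p+q \<Longrightarrow> D i k < s k" using assms(2) by (simp add: U_type_def)
  have spos: "0 < s k" if "k < p+q" for k
  proof -
    have "D 0 k < s k" using lev[of 0 k] assms(1) that by simp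
    then show ?thesis by simp
  qed
  have sposp: "\<And>k. k < p \<Longrightarrow> 0 < s k" using spos by simp
  interpret P: product_sigma_finite "chiM p s"
    by (rule product_sigma_finite.intro) (intro prob_space_imp_sigma_finite prob_chiM sposp)
  have F_eq: "F = PiM I (chiM p s)" by (simp add: F_def I_def chi_eq)
  define C where "C = (\<Prod>k\<in>I. ck p s k)"
  define g where "g = (\<lambda>k u. integral\<^sup>L (chiM p s k) (\<lambda>z. kernel1 p k u z))"
  have inner: "(\<integral>z. kernel p q t z \<partial>F) = (\<Prod>k\<in>I. g k (t k))" for t
  proof -
    define f where "f = (\<lambda>k z. kernel1 p k (t k) z)"
    have "(\<integral>z. kernel p q t z \<partial>F) = (\<integral>z. (\<Prod>k\<in>I. f k (z k)) \<partial>PiM I (chiM p s))"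
      by (simp add: F_eq kernel_def I_def f_def)
    also have "\<dots> = (\<Prod>k\<in>I. integral\<^sup>L (chiM p s k) (f k))"
      by (rule P.product_integral_prod) (auto simp: I_def f_def intro: K_integrable)
    finally show ?thesis by (simp add: g_def f_def)
  qed
  have T1: "(\<integral>t. (\<integral>z. kernel p q t z \<partial>F) \<partial>F) = C"
  proof -
    have "(\<integral>t. (\<integral>z. kernel p q t z \<partial>F) \<partial>F) = (\<integral>t. (\<Prod>k\<in>I. g k (t k)) \<partial>F)"
      by (simp only: inner)
    also have "\<dots> = (\<Prod>k\<in>I. integral\<^sup>L (chiM p s k) (g k))"
      unfolding F_eq by (rule P.product_integral_prod) (auto simp: I_def g_def intro: g_props(1) sposp)
    also have "\<dots> = C" unfolding C_def
      by (rule prod.cong[OF refl]) (auto simp: g_def intro: g_props(2) sposp)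
    finally show ?thesis .
  qed
  have xin: "\<And>i k. i < n \<Longrightarrow> k < p+q \<Longrightarrow> x i k \<in> Xset p s k"
  proof -
    fix i k assume ik: "i < n" "k < p+q"
    have a: "D i k < s k" using lev[OF ik] .
    show "x i k \<in> Xset p s k"
    proof (cases "k < p")
      case True then show ?thesis using a by (simp add: x_def design_point_def Xset_def)
    next
      case False
      have "2 * real (D i k) + 1 \<le> 2 * real (s k)" using a by linarith
      then show ?thesis using False spos[OF ik(2)]
        by (simp add: x_def design_point_def Xset_def divide_le_eq_1)
    qed
  qed
  have T2: "(\<integral>t. kernel p q t (x i) \<partial>F) = C" if i: "i < n" for i
  proof -
    define f where "f = (\<lambda>k z. kernel1 p k (x i k) z)"
    have kf: "kernel p q t (x i) = (\<Prod>k\<in>I. f k (t k))" for t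
      unfolding kernel_def I_def f_def by (rule prod.cong[OF refl]) (rule K_sym)
    have "(\<integral>t. kernel p q t (x i) \<partial>F) = (\<integral>z. (\<Prod>k\<in>I. f k (z k)) \<partial>PiM I (chiM p s))"
      unfolding kf F_eq ..
    also have "\<dots> = (\<Prod>k\<in>I. integral\<^sup>L (chiM p s k) (f k))"
      by (rule P.product_integral_prod) (auto simp: I_def f_def intro: K_integrable)
    also have "\<dots> = C" unfolding C_def
      by (rule prod.cong[OF refl]) (auto simp: f_def I_def intro!: K_int sposp xin i)
    finally show ?thesis .
  qed
  have hb: "\<forall>i<n. lex_index s (p+q) (D i) < N"
    unfolding N_def using lev by (auto intro!: lex_index_less)
  have T3: "kernel p q (x i) (x j) = A_matrix p q s (lex_index s (p+q) (D i)) (lex_index s (p+q) (D j))"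
    if "i < n" "j < n" for i j
  proof -
    have "kernel p q (x i) (x j) = (\<Prod>k<p+q. A_factor p s k (D i k) (D j k))"
      unfolding kernel_def x_def
      by (rule prod.cong[OF refl]) (auto intro!: K_A spos lev that)
    also have "\<dots> = A_matrix p q s (lex_index s (p+q) (D i)) (lex_index s (p+q) (D j))"
      by (rule A_kron[symmetric]) (auto intro: lev that)
    finally show ?thesis .
  qed
  have S3: "(\<Sum>i<n. \<Sum>j<n. kernel p q (x i) (x j)) =
      (\<Sum>a<N. \<Sum>b<N. y_vec n s (p + q) D a * A_matrix p q s a b * y_vec n s (p + q) D b)"
  proof -
    have "(\<Sum>i<n. \<Sum>j<n. kernel p q (x i) (x j)) =
       (\<Sum>i<n. \<Sum>j<n. A_matrix p q s (lex_index s (p+q) (D i)) (lex_index s (p+q) (D j)))"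
      by (auto intro!: sum.cong T3)
    also have "\<dots> = (\<Sum>a<N. \<Sum>b<N. y_vec n s (p + q) D a * A_matrix p q s a b * y_vec n s (p + q) D b)"
      unfolding y_vec_def by (rule double_group[OF hb])
    finally show ?thesis .
  qed
  have Cval: "C = (\<Prod>k<p. (5 * real (s k) + 1) / (4 * real (s k))) * (4/3) ^ q"
  proof -
    have I: "I = {..<p} \<union> {p..<p+q}" by (auto simp: I_def)
    have "C = (\<Prod>k<p. ck p s k) * (\<Prod>k\<in>{p..<p+q}. ck p s k)"
      unfolding C_def I by (rule prod.union_disjoint) auto
    also have "(\<Prod>k<p. ck p s k) = (\<Prod>k<p. (5 * real (s k) + 1) / (4 * real (s k)))"
      by (rule prod.cong) (auto simp: ck_def)
    also have "(\<Prod>k\<in>{p..<p+q}. ck p s k) = (\<Prod>k\<in>{p..<p+q}. 4/3)"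
      by (rule prod.cong) (auto simp: ck_def)
    also have "\<dots> = (4/3) ^ q" by simp
    finally show ?thesis .
  qed
  have "QQD2 n p q s D = C - 2 / real n * (\<Sum>i<n. C) + 1 / (real n)^2 * (\<Sum>i<n. \<Sum>j<n. kernel p q (x i) (x j))"
    unfolding QQD2_def Let_def F_def[symmetric] x_def[symmetric] T1
    using T2 by simp
  also have "\<dots> = - C + 1 / (real n)^2 * (\<Sum>a<N. \<Sum>b<N. y_vec n s (p + q) D a * A_matrix p q s a b * y_vec n s (p + q) D b)"
    unfolding S3 using assms(1) by simp
  finally show ?thesis unfolding Cval N_def Let_def by simp
qed

end
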